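(* Let $G$ be a weighted graph, $s\in[0,1]^V$ a vector of innate opinions, $z=(I+L)^{-1}s$ the equilibrium opinions, and $P=P(z)$. Let $k\in\mathbb{N}$ and let $s'\in[0,1]^V$ satisfy $\|s'-s\|_0\le k$. Let $z'=(I+L)^{-1}s'$ and $P'=P(z')$. Then $P'\le P+3k$.
   Context: $G=(V,E,w)$ is a weighted undirected graph on $n=|V|$ vertices, with weights $w_{u,v}\in(0,1]$ for $(u,v)\in E$ and $w_{u,v}=0$ otherwise (and $w_{v,v}=0$). $L=\mathrm{Diag}(d)-A$ is the weighted Laplacian, where $A_{u,v}=w_{u,v}$ and $d_v=\sum_u w_{v,u}$. Polarization of a vector $z\in\mathbb{R}^V$ is $P(z)=\sum_{v\in V}(z_v-\bar z)^2$ with $\bar z=\frac1n\sum_v z_v$. $\|x\|_0$ denotes the number of nonzero coordinates of $x$. *)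

theory Defs
  imports "HOL-Analysis.Analysis"
begin

text \<open>Vertex set V is a finite type 'n. Weights w u v; the graph is weighted undirected:
  w symmetric, w v v = 0, w u v in [0,1] (edges are exactly pairs with positive weight).\<close>

definition weighted_graph :: "('n::finite \<Rightarrow> 'n \<Rightarrow> real) \<Rightarrow> bool" where
  "weighted_graph w \<longleftrightarrow> (\<forall>u v. w u v = w v u) \<and> (\<forall>v. w v v = 0) \<and>
     (\<forall>u v. 0 \<le> w u v \<and> w u v \<le> 1)"

definition degree :: "('n::finite \<Rightarrow> 'n \<Rightarrow> real) \<Rightarrow> 'n \<Rightarrow> real" where
  "degree w v = (\<Sum>u\<in>UNIV. w v u)"

definition laplacian :: "('n::finite \<Rightarrow> 'n \<Rightarrow> real) \<Rightarrow> real^'n^'n" where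
  "laplacian w = (\<chi> u v. (if u = v then degree w u else 0) - w u v)"

definition equilibrium :: "('n::finite \<Rightarrow> 'n \<Rightarrow> real) \<Rightarrow> real^'n \<Rightarrow> real^'n" where
  "equilibrium w s = matrix_inv (mat 1 + laplacian w) *v s"

definition polarization :: "real^'n::finite \<Rightarrow> real" where
  "polarization z = (\<Sum>v\<in>UNIV. (z $ v - (\<Sum>u\<in>UNIV. z $ u) / real CARD('n))^2)"

definition l0norm :: "real^'n::finite \<Rightarrow> nat" where
  "l0norm x = card {v. x $ v \<noteq> 0}"

end

theory Submission
  imports Defs
begin

lemma Mv:
  fixes w :: "'n::finite \<Rightarrow> 'n \<Rightarrow> real"
  shows "((mat 1 + laplacian w) *v z) $ v = z$v + (\<Sum>u\<in>UNIV. w v u * (z$v - z$u))"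
proof -
  have "((mat 1 + laplacian w) *v z) $ v
      = (\<Sum>u\<in>UNIV. ((if v = u then 1 else 0) + (if v = u then degree w v else 0) - w v u) * z$u)"
    by (simp add: matrix_vector_mult_def laplacian_def mat_def add_diff_eq)
  also have "\<dots> = (\<Sum>u\<in>UNIV. (if v = u then (1 + degree w v) * z$u else 0) - w v u * z$u)"
    by (rule sum.cong) (auto simp: algebra_simps)
  also have "\<dots> = (1 + degree w v) * z$v - (\<Sum>u\<in>UNIV. w v u * z$u)"
    by (simp add: sum_subtractf)
  also have "\<dots> = z$v + (\<Sum>u\<in>UNIV. w v u * (z$v - z$u))"
    by (simp add: degree_def algebra_simps sum_subtractf sum_distrib_left sum_distrib_right)
  finally show ?thesis .
qed

lemma maxprin:
  fixes w :: "'n::finite \<Rightarrow> 'n \<Rightarrow> real"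
  assumes wg: "weighted_graph w"
    and hs: "\<forall>v. a \<le> ((mat 1 + laplacian w) *v z) $ v \<and> ((mat 1 + laplacian w) *v z) $ v \<le> b"
  shows "a \<le> z$v \<and> z$v \<le> b"
proof -
  have wn: "\<And>x y. 0 \<le> w x y" using wg by (simp add: weighted_graph_def)
  define R where "R = range (\<lambda>u. z$u)"
  have fin: "finite R" "R \<noteq> {}" by (auto simp: R_def)
  have "Max R \<in> R" "Min R \<in> R" using Max_in[OF fin] Min_in[OF fin] by auto
  then obtain m p where m: "z$m = Max R" and p: "z$p = Min R" unfolding R_def by (metis imageE)
  have mge: "\<And>u. z$u \<le> z$m" using m fin by (auto simp: R_def)
  have ple: "\<And>u. z$p \<le> z$u" using p fin by (auto simp: R_def)
  have "0 \<le> (\<Sum>u\<in>UNIV. w m u * (z$m - z$u))"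
    by (rule sum_nonneg) (simp add: wn mge)
  then have "z$m \<le> b" using hs[rule_format, of m] by (simp add: Mv)
  moreover have "(\<Sum>u\<in>UNIV. w p u * (z$p - z$u)) \<le> 0"
    by (rule sum_nonpos) (simp add: wn ple mult_nonneg_nonpos)
  then have "a \<le> z$p" using hs[rule_format, of p] by (simp add: Mv)
  ultimately show ?thesis using mge[of v] ple[of v] by linarith
qed

lemma inv_ok:
  fixes w :: "'n::finite \<Rightarrow> 'n \<Rightarrow> real"
  assumes wg: "weighted_graph w"
  shows "(mat 1 + laplacian w) *v (matrix_inv (mat 1 + laplacian w) *v s) = s"
proof -
  let ?M = "mat 1 + laplacian w"
  have "\<forall>x. ?M *v x = 0 \<longrightarrow> x = 0"
  proof (intro allI impI)
    fix x assume "?M *v x = 0"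
    then have "\<And>v. 0 \<le> x$v \<and> x$v \<le> 0" using maxprin[OF wg, of 0 x 0] by simp
    then show "x = 0" by (simp add: vec_eq_iff) (meson order_antisym)
  qed
  then have "invertible ?M"
    by (simp add: invertible_left_inverse matrix_left_invertible_ker)
  then have "\<exists>A'. ?M ** A' = mat 1 \<and> A' ** ?M = mat 1" by (simp add: invertible_def)
  then have "?M ** matrix_inv ?M = mat 1"
    unfolding matrix_inv_def by (rule someI_ex[where P="\<lambda>A'. ?M ** A' = mat 1 \<and> A' ** ?M = mat 1", THEN conjunct1])
  then show ?thesis by (simp add: matrix_vector_mul_assoc)
qed

lemma Msym:
  fixes w :: "'n::finite \<Rightarrow> 'n \<Rightarrow> real"
  assumes wg: "weighted_graph w"
  shows "(\<Sum>v\<in>UNIV. e$v * ((mat 1 + laplacian w) *v f)$v) = (\<Sum>v\<in>UNIV. ((mat 1 + laplacian w) *v e)$v * f$v)"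
proof -
  have sy: "\<And>x y. w x y = w y x" using wg by (simp add: weighted_graph_def)
  have sw: "(\<Sum>v\<in>UNIV. \<Sum>u\<in>UNIV. e$u * (f$v * w v u)) = (\<Sum>v\<in>UNIV. \<Sum>u\<in>UNIV. e$v * (f$u * w v u))"
    by (subst sum.swap) (rule sum.cong[OF refl], rule sum.cong[OF refl], simp add: sy[of _ ])
  have "(\<Sum>v\<in>UNIV. e$v * ((mat 1 + laplacian w) *v f)$v)
      = (\<Sum>v\<in>UNIV. e$v * f$v) + (\<Sum>v\<in>UNIV. \<Sum>u\<in>UNIV. w v u * e$v * f$v) - (\<Sum>v\<in>UNIV. \<Sum>u\<in>UNIV. w v u * e$v * f$u)"
    unfolding Mv by (simp add: algebra_simps sum_distrib_left sum_subtractf sum.distrib)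
  also have "\<dots> = (\<Sum>v\<in>UNIV. ((mat 1 + laplacian w) *v e)$v * f$v)"
    unfolding Mv by (simp add: sw algebra_simps sum_distrib_left sum_distrib_right sum_subtractf sum.distrib)
  finally show ?thesis .
qed

theorem theorem1p2:
  fixes w :: "'n::finite \<Rightarrow> 'n \<Rightarrow> real" and s s' :: "real^'n" and k :: nat
  assumes "weighted_graph w"
    and "\<forall>v. 0 \<le> s $ v \<and> s $ v \<le> 1"
    and "\<forall>v. 0 \<le> s' $ v \<and> s' $ v \<le> 1"
    and "l0norm (s' - s) \<le> k"
  shows "polarization (equilibrium w s') \<le> polarization (equilibrium w s) + 3 * real k"
proof -
  note wg = assms(1)
  let ?M = "mat 1 + laplacian w"
  define z where "z = equilibrium w s"
  define z' where "z' = equilibrium w s'"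
  have Mz: "?M *v z = s" unfolding z_def equilibrium_def by (rule inv_ok[OF wg])
  have Mz': "?M *v z' = s'" unfolding z'_def equilibrium_def by (rule inv_ok[OF wg])
  have zb: "\<And>v. 0 \<le> z$v \<and> z$v \<le> 1" using maxprin[OF wg, of 0 z 1] Mz assms(2) by simp
  have zb': "\<And>v. 0 \<le> z'$v \<and> z'$v \<le> 1" using maxprin[OF wg, of 0 z' 1] Mz' assms(3) by simp
  define N where "N = real CARD('n)"
  have Npos: "N > 0" by (simp add: N_def)
  define mz where "mz = (\<Sum>u\<in>UNIV. z $ u) / N"
  define mz' where "mz' = (\<Sum>u\<in>UNIV. z' $ u) / N"
  define me where "me = mz' - mz"
  define c where "c = (\<chi> v. z$v + z'$v - mz - mz')"
  define e where "e = z' - z"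
  define d where "d = s' - s"
  have Me: "?M *v e = d" unfolding e_def d_def by (simp add: matrix_vector_mult_diff_distrib Mz Mz')
  have mzb: "0 \<le> mz \<and> mz \<le> 1"
  proof -
    have "0 \<le> (\<Sum>u\<in>UNIV. z $ u)" by (rule sum_nonneg) (simp add: zb)
    moreover have "(\<Sum>u\<in>UNIV. z $ u) \<le> (\<Sum>u\<in>(UNIV::'n set). 1)" by (rule sum_mono) (simp add: zb)
    ultimately show ?thesis using Npos by (simp add: mz_def N_def field_simps)
  qed
  have mzb': "0 \<le> mz' \<and> mz' \<le> 1"
  proof -
    have "0 \<le> (\<Sum>u\<in>UNIV. z' $ u)" by (rule sum_nonneg) (simp add: zb')
    moreover have "(\<Sum>u\<in>UNIV. z' $ u) \<le> (\<Sum>u\<in>(UNIV::'n set). 1)" by (rule sum_mono) (simp add: zb')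
    ultimately show ?thesis using Npos by (simp add: mz'_def N_def field_simps)
  qed
  have cb: "\<forall>v. -2 \<le> c$v \<and> c$v \<le> 2" using zb zb' mzb mzb' by (simp add: c_def) (smt (verit) zb zb')
  have csum: "(\<Sum>v\<in>UNIV. c$v) = 0"
    using Npos by (simp add: c_def sum.distrib sum_subtractf mz_def mz'_def N_def)
  define f where "f = matrix_inv ?M *v c"
  have Mf: "?M *v f = c" unfolding f_def by (rule inv_ok[OF wg])
  have fb: "\<And>v. -2 \<le> f$v \<and> f$v \<le> 2" using maxprin[OF wg, of "-2" f 2] Mf cb by simp
  have "polarization z' - polarization z = (\<Sum>v\<in>UNIV. (z'$v - mz')^2 - (z$v - mz)^2)"
    by (simp add: polarization_def mz_def mz'_def N_def sum_subtractf)
  also have "\<dots> = (\<Sum>v\<in>UNIV. (e$v - me) * c$v)"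
    by (rule sum.cong) (simp_all add: e_def me_def c_def power2_eq_square algebra_simps)
  also have "\<dots> = (\<Sum>v\<in>UNIV. e$v * c$v) - me * (\<Sum>v\<in>UNIV. c$v)"
    by (simp add: algebra_simps sum_subtractf sum_distrib_left)
  also have "\<dots> = (\<Sum>v\<in>UNIV. e$v * c$v)" by (simp add: csum)
  also have "\<dots> = (\<Sum>v\<in>UNIV. d$v * f$v)"
    using Msym[OF wg, of e f] by (simp add: Mf Me)
  also have "\<dots> = (\<Sum>v\<in>{v. d$v \<noteq> 0}. d$v * f$v)"
    by (rule sum.mono_neutral_right) auto
  also have "\<dots> \<le> (\<Sum>v\<in>{v. d$v \<noteq> 0}. 2)"
  proof (rule sum_mono)
    fix v
    have "\<bar>d$v\<bar> \<le> 1" using assms(2,3) by (simp add: d_def) (smt (verit) assms(2,3))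
    then have "\<bar>d$v * f$v\<bar> \<le> 1 * 2" unfolding abs_mult
      using fb[of v] by (intro mult_mono) auto
    then show "d$v * f$v \<le> 2" by simp
  qed
  also have "\<dots> = 2 * real (l0norm d)" by (simp add: l0norm_def)
  also have "\<dots> \<le> 3 * real k" using assms(4) by (simp add: d_def)
  finally show ?thesis by (simp add: z_def z'_def)
qed

end
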